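(* Let $\Gamma$ be a finite group, $F:\Gamma\to\Gamma$ a group automorphism, and $\mathbf{E}=\bigoplus_{w\in\Gamma}\mathbf{E}_w$ a finite-dimensional associative $\bar{\mathbb{Q}}_l$-algebra with $1$ with $\dim\mathbf{E}_w=1$, $\mathbf{E}_w\mathbf{E}_y=\mathbf{E}_{wy}$; choose basis elements $b_w\in\mathbf{E}_w$. Let $\iota:\mathbf{E}\to\mathbf{E}$ be an algebra automorphism with $\iota(\mathbf{E}_w)=\mathbf{E}_{F(w)}$ for all $w$. Let $V$ be a simple $\mathbf{E}$-module admitting a linear isomorphism $\iota_V:V\to V$ with $\iota_V(ev)=\iota(e)\iota_V(v)$ for all $e,v$. If $x\in\Gamma$ is not effective, then $\mathrm{tr}(\iota_Vb_x,V)=0$.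
   Context: For $x\in\Gamma$ let $\Gamma_x=\{y\in\Gamma: F^{-1}(y)xy^{-1}=x\}$, and define $\gamma_x:\Gamma_x\to\bar{\mathbb{Q}}_l^*$ by $\iota^{-1}(b_y)b_x=\gamma_x(y)b_xb_y$. The element $x$ is called effective if $\gamma_x(y)=1$ for all $y\in\Gamma_x$. *)

theory Defs
  imports "HOL-Algebra.Group" "HOL-Computational_Algebra.Polynomial"
begin

text \<open>Algebraically closed field (the role of the algebraic closure of Q_l).\<close>
definition alg_closed :: "'k::field itself \<Rightarrow> bool" where
  "alg_closed _ \<longleftrightarrow> (\<forall>p::'k poly. degree p > 0 \<longrightarrow> (\<exists>z. poly p z = 0))"

definition lin_trace :: "('k::field \<Rightarrow> 'v::ab_group_add \<Rightarrow> 'v) \<Rightarrow> ('v \<Rightarrow> 'v) \<Rightarrow> 'k" where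
  "lin_trace s f =
     (let B = (SOME B. \<not> module.dependent s B \<and> module.span s B = UNIV)
      in \<Sum>v\<in>B. module.representation s B (f v) v)"

definition is_algebra :: "('k::field \<Rightarrow> 'e::ring_1 \<Rightarrow> 'e) \<Rightarrow> bool" where
  "is_algebra s \<longleftrightarrow> vector_space s \<and>
     (\<forall>c a d. s c (a * d) = s c a * d \<and> s c (a * d) = a * s c d)"

definition direct_sum_decomp :: "('a, 'm) monoid_scheme \<Rightarrow> ('k::field \<Rightarrow> 'e::ring_1 \<Rightarrow> 'e) \<Rightarrow> ('a \<Rightarrow> 'e set) \<Rightarrow> bool" where
  "direct_sum_decomp G s Esub \<longleftrightarrow>
     (\<forall>w\<in>carrier G. module.subspace s (Esub w)) \<and>
     (\<forall>e. \<exists>!c. (\<forall>w\<in>carrier G. c w \<in> Esub w) \<and> (\<forall>w. w \<notin> carrier G \<longrightarrow> c w = 0) \<and>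
             e = (\<Sum>w\<in>carrier G. c w))"

definition is_module :: "('k::field \<Rightarrow> 'e::ring_1 \<Rightarrow> 'e) \<Rightarrow> ('k \<Rightarrow> 'v::ab_group_add \<Rightarrow> 'v) \<Rightarrow> ('e \<Rightarrow> 'v \<Rightarrow> 'v) \<Rightarrow> bool" where
  "is_module sE sV act \<longleftrightarrow> vector_space sV \<and>
     (\<forall>a d v. act (a * d) v = act a (act d v)) \<and> (\<forall>v. act 1 v = v) \<and>
     (\<forall>a d v. act (a + d) v = act a v + act d v) \<and>
     (\<forall>a u v. act a (u + v) = act a u + act a v) \<and>
     (\<forall>c a v. act (sE c a) v = sV c (act a v)) \<and>
     (\<forall>c a v. act a (sV c v) = sV c (act a v))"

definition simple_module :: "('k::field \<Rightarrow> 'v::ab_group_add \<Rightarrow> 'v) \<Rightarrow> ('e \<Rightarrow> 'v \<Rightarrow> 'v) \<Rightarrow> bool" where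
  "simple_module sV act \<longleftrightarrow> (\<exists>v::'v. v \<noteq> 0) \<and>
     (\<forall>W. module.subspace sV W \<and> (\<forall>a. \<forall>v\<in>W. act a v \<in> W) \<longrightarrow> W = {0} \<or> W = UNIV)"

definition Gamma_x :: "('a, 'm) monoid_scheme \<Rightarrow> ('a \<Rightarrow> 'a) \<Rightarrow> 'a \<Rightarrow> 'a set" where
  "Gamma_x G F x = {y \<in> carrier G. monoid.mult G (monoid.mult G (inv_into (carrier G) F y) x) (m_inv G y) = x}"

definition gamma_x :: "('k::field \<Rightarrow> 'e::ring_1 \<Rightarrow> 'e) \<Rightarrow> ('e \<Rightarrow> 'e) \<Rightarrow> ('a \<Rightarrow> 'e) \<Rightarrow> 'a \<Rightarrow> 'a \<Rightarrow> 'k" where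
  "gamma_x s \<iota> b x y = (THE c. inv_into UNIV \<iota> (b y) * b x = s c (b x * b y))"

definition effective :: "('a, 'm) monoid_scheme \<Rightarrow> ('a \<Rightarrow> 'a) \<Rightarrow> ('k::field \<Rightarrow> 'e::ring_1 \<Rightarrow> 'e) \<Rightarrow> ('e \<Rightarrow> 'e) \<Rightarrow> ('a \<Rightarrow> 'e) \<Rightarrow> 'a \<Rightarrow> bool" where
  "effective G F s \<iota> b x \<longleftrightarrow> (\<forall>y\<in>Gamma_x G F x. gamma_x s \<iota> b x y = 1)"

end

theory Submission
  imports Defs
begin

context vector_space begin

lemma lt_basis:
  assumes "finite S" "span S = UNIV"
  defines "Bs \<equiv> (SOME B. \<not> dependent B \<and> span B = UNIV)"
  shows "independent Bs" "span Bs = UNIV" "finite Bs"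
proof -
  obtain B where "independent B" "UNIV \<subseteq> span B" using basis_exists[of UNIV] by blast
  then have "\<not> dependent B \<and> span B = UNIV" by auto
  then have *: "\<not> dependent Bs \<and> span Bs = UNIV" unfolding Bs_def by (rule someI)
  then show "independent Bs" "span Bs = UNIV" by auto
  have sB: "Bs \<subseteq> span S" using assms(2) by simp
  show "finite Bs" by (rule conjunct1[OF independent_span_bound[OF assms(1) conjunct1[OF *] sB]])
qed

lemma lt_def2:
  "lin_trace scale f = (\<Sum>v\<in>(SOME B. \<not> dependent B \<and> span B = UNIV). representation (SOME B. \<not> dependent B \<and> span B = UNIV) (f v) v)"
  unfolding lin_trace_def Let_def by simp

lemma lt_expand:
  assumes "independent Bs" "span Bs = UNIV" "finite Bs"
    and f: "Vector_Spaces.linear scale scale f"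
  shows "representation Bs (f w) v = (\<Sum>u\<in>Bs. representation Bs w u * representation Bs (f u) v)"
proof -
  interpret L: Vector_Spaces.linear scale scale f by (rule f)
  have wsp: "w \<in> span Bs" using assms(2) by simp
  have w_eq: "(\<Sum>u\<in>Bs. representation Bs w u *s u) = w"
    by (rule sum_representation_eq[OF assms(1) wsp assms(3) order_refl])
  have "f w = f (\<Sum>u\<in>Bs. representation Bs w u *s u)" by (simp only: w_eq)
  also have "\<dots> = (\<Sum>u\<in>Bs. f (representation Bs w u *s u))" by (rule L.sum)
  also have "\<dots> = (\<Sum>u\<in>Bs. representation Bs w u *s f u)" by (simp only: L.scale)
  finally have fw: "f w = (\<Sum>u\<in>Bs. representation Bs w u *s f u)" .
  have sp: "\<And>u. u \<in> Bs \<Longrightarrow> representation Bs w u *s f u \<in> span Bs" using assms(2) by simp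
  have "representation Bs (f w) v = (\<Sum>u\<in>Bs. representation Bs (representation Bs w u *s f u) v)"
    unfolding fw by (simp only: representation_sum[OF assms(1) sp])
  also have "\<dots> = (\<Sum>u\<in>Bs. representation Bs w u * representation Bs (f u) v)"
  proof (rule sum.cong[OF refl])
    fix u assume "u \<in> Bs"
    have "f u \<in> span Bs" using assms(2) by simp
    then show "representation Bs (representation Bs w u *s f u) v = representation Bs w u * representation Bs (f u) v"
      by (simp only: representation_scale[OF assms(1)])
  qed
  finally show ?thesis .
qed

lemma trace_comm:
  assumes "finite S" "span S = UNIV"
    and f: "Vector_Spaces.linear scale scale f" and g: "Vector_Spaces.linear scale scale g"
  shows "lin_trace scale (f \<circ> g) = lin_trace scale (g \<circ> f)"
proof -
  define Bs where "Bs \<equiv> (SOME B. \<not> dependent B \<and> span B = UNIV)"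
  note B = lt_basis[OF assms(1,2), folded Bs_def]
  have "lin_trace scale (f \<circ> g) = (\<Sum>v\<in>Bs. representation Bs (f (g v)) v)"
    unfolding lt_def2 Bs_def[symmetric] by simp
  also have "\<dots> = (\<Sum>v\<in>Bs. \<Sum>u\<in>Bs. representation Bs (g v) u * representation Bs (f u) v)"
    by (intro sum.cong refl) (rule lt_expand[OF B f])
  also have "\<dots> = (\<Sum>u\<in>Bs. \<Sum>v\<in>Bs. representation Bs (g v) u * representation Bs (f u) v)"
    by (rule sum.swap)
  also have "\<dots> = (\<Sum>u\<in>Bs. \<Sum>v\<in>Bs. representation Bs (f u) v * representation Bs (g v) u)"
    by (intro sum.cong refl) (rule mult.commute)
  also have "\<dots> = (\<Sum>u\<in>Bs. representation Bs (g (f u)) u)"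
    by (intro sum.cong refl) (rule lt_expand[OF B g, symmetric])
  also have "\<dots> = lin_trace scale (g \<circ> f)"
    unfolding lt_def2 Bs_def[symmetric] by simp
  finally show ?thesis .
qed

lemma trace_scale:
  assumes "finite S" "span S = UNIV"
  shows "lin_trace scale (\<lambda>v. c *s f v) = c * lin_trace scale f"
proof -
  define Bs where "Bs \<equiv> (SOME B. \<not> dependent B \<and> span B = UNIV)"
  note B = lt_basis[OF assms(1,2), folded Bs_def]
  show ?thesis unfolding lt_def2 Bs_def[symmetric]
    using representation_scale[of Bs] B by (simp add: sum_distrib_left)
qed

lemma dim1_span:
  assumes "dim S = 1" "b \<in> S" "b \<noteq> 0" "a \<in> S"
  shows "\<exists>c. a = c *s b"
proof -
  obtain B where B: "B \<subseteq> S" "independent B" "S \<subseteq> span B" "card B = dim S"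
    using basis_exists by blast
  then obtain c where Bc: "B = {c}" using assms(1) card_1_singletonE by metis
  have sp: "span B = range (\<lambda>k. k *s c)" unfolding Bc by (rule span_singleton)
  obtain k where k: "b = k *s c" using B(3) assms(2) unfolding sp by blast
  obtain m where m: "a = m *s c" using B(3) assms(4) unfolding sp by blast
  have "k \<noteq> 0" using k assms(3) by auto
  then have "a = (m / k) *s b" using k m by simp
  then show ?thesis by blast
qed

end

theorem mainTheorem15:
  fixes G :: "('a, 'm) monoid_scheme" (structure)
    and F :: "'a \<Rightarrow> 'a"
    and sE :: "'k::field_char_0 \<Rightarrow> 'e::ring_1 \<Rightarrow> 'e"
    and Esub :: "'a \<Rightarrow> 'e set"
    and b :: "'a \<Rightarrow> 'e"
    and \<iota> :: "'e \<Rightarrow> 'e"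
    and sV :: "'k \<Rightarrow> 'v::ab_group_add \<Rightarrow> 'v"
    and act :: "'e \<Rightarrow> 'v \<Rightarrow> 'v"
    and \<iota>V :: "'v \<Rightarrow> 'v"
    and x :: 'a
  assumes closed: "alg_closed TYPE('k)"
    and grp: "group G" and fin: "finite (carrier G)"
    and autF: "F \<in> iso G G"
    and alg: "is_algebra sE"
    and dsum: "direct_sum_decomp G sE Esub"
    and dim1: "\<forall>w\<in>carrier G. vector_space.dim sE (Esub w) = 1"
    and mult: "\<forall>w\<in>carrier G. \<forall>y\<in>carrier G.
                 {a * c | a c. a \<in> Esub w \<and> c \<in> Esub y} = Esub (w \<otimes> y)"
    and bas: "\<forall>w\<in>carrier G. b w \<in> Esub w \<and> b w \<noteq> 0"
    and iota_bij: "bij \<iota>"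
    and iota_mult: "\<forall>a c. \<iota> (a * c) = \<iota> a * \<iota> c"
    and iota_one: "\<iota> 1 = 1"
    and iota_add: "\<forall>a c. \<iota> (a + c) = \<iota> a + \<iota> c"
    and iota_scale: "\<forall>k a. \<iota> (sE k a) = sE k (\<iota> a)"
    and iota_grad: "\<forall>w\<in>carrier G. \<iota> ` Esub w = Esub (F w)"
    and V_mod: "is_module sE sV act"
    and V_simple: "simple_module sV act"
    and iotaV_lin: "Vector_Spaces.linear sV sV \<iota>V"
    and iotaV_bij: "bij \<iota>V"
    and iotaV_comm: "\<forall>e v. \<iota>V (act e v) = act (\<iota> e) (\<iota>V v)"
    and x_in: "x \<in> carrier G"
    and not_eff: "\<not> effective G F sE \<iota> b x"
  shows "lin_trace sV (\<iota>V \<circ> act (b x)) = 0"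
proof -
  interpret grp: group G by (rule grp)
  interpret E: vector_space sE using alg unfolding is_algebra_def by blast
  interpret V: vector_space sV using V_mod unfolding is_module_def by blast
  have sc1: "sE c (a * d) = sE c a * d" for c a d using alg unfolding is_algebra_def by blast
  have sc2: "sE c (a * d) = a * sE c d" for c a d using alg unfolding is_algebra_def by blast
  have act_mult: "act (a * d) v = act a (act d v)" for a d v using V_mod unfolding is_module_def by blast
  have act_one: "act 1 v = v" for v using V_mod unfolding is_module_def by blast
  have act_addl: "act (a + d) v = act a v + act d v" for a d v using V_mod unfolding is_module_def by blast
  have act_addr: "act a (u + v) = act a u + act a v" for a u v using V_mod unfolding is_module_def by blast
  have act_scl: "act (sE c a) v = sV c (act a v)" for c a v using V_mod unfolding is_module_def by blast
  have act_scr: "act a (sV c v) = sV c (act a v)" for c a v using V_mod unfolding is_module_def by blast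
  have act_zero: "act 0 v = 0" for v using act_addl[of 0 0 v] by simp
  have act_lin: "Vector_Spaces.linear sV sV (act a)" for a
    by (simp add: Vector_Spaces.linear_iff act_addr act_scr V.vector_space_axioms)
  have ds1: "\<forall>w\<in>carrier G. E.subspace (Esub w)"
    using dsum unfolding direct_sum_decomp_def by (rule conjunct1)
  have ds2: "\<forall>e. \<exists>!c. (\<forall>w\<in>carrier G. c w \<in> Esub w) \<and> (\<forall>w. w \<notin> carrier G \<longrightarrow> c w = 0) \<and>
             e = (\<Sum>w\<in>carrier G. c w)"
    using dsum unfolding direct_sum_decomp_def by (rule conjunct2)
  have sub: "E.subspace (Esub w)" if "w \<in> carrier G" for w using ds1 that by blast
  have bw: "b w \<in> Esub w" "b w \<noteq> 0" if "w \<in> carrier G" for w using bas that by auto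
  have A1: "\<exists>c. a = sE c (b w)" if "w \<in> carrier G" "a \<in> Esub w" for w a
    using E.dim1_span[of "Esub w" "b w" a] dim1 bw that by auto
  have A2: "b w * b u \<in> Esub (w \<otimes> u)" if "w \<in> carrier G" "u \<in> carrier G" for w u
    using mult that bw by blast
  have A3: "b w * b u \<noteq> 0" if w: "w \<in> carrier G" and u: "u \<in> carrier G" for w u
  proof
    assume z: "b w * b u = 0"
    have "Esub (w \<otimes> u) \<subseteq> {0}"
    proof
      fix z0 assume "z0 \<in> Esub (w \<otimes> u)"
      moreover have m: "{a * c | a c. a \<in> Esub w \<and> c \<in> Esub u} = Esub (w \<otimes> u)"
        using mult w u by (simp only: Ball_def)
      ultimately have "z0 \<in> {a * c | a c. a \<in> Esub w \<and> c \<in> Esub u}" by (simp only:)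
      then obtain a c where ac: "z0 = a * c" "a \<in> Esub w" "c \<in> Esub u" by blast
      obtain \<alpha> where "a = sE \<alpha> (b w)" using A1[OF w ac(2)] by blast
      moreover obtain \<beta> where "c = sE \<beta> (b u)" using A1[OF u ac(3)] by blast
      ultimately have "z0 = sE \<alpha> (b w) * sE \<beta> (b u)" using ac by simp
      also have "\<dots> = sE \<alpha> (b w * sE \<beta> (b u))" by (rule sc1[symmetric])
      also have "\<dots> = sE \<alpha> (sE \<beta> (b w * b u))" by (simp only: sc2[symmetric])
      finally have "z0 = sE \<alpha> (sE \<beta> (b w * b u))" .
      then show "z0 \<in> {0}" using z by simp
    qed
    moreover obtain B0 where B0: "B0 \<subseteq> Esub (w \<otimes> u)" "E.independent B0" "card B0 = E.dim (Esub (w \<otimes> u))"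
      by (rule E.basis_exists)
    moreover have "0 \<notin> B0" by (metis B0(2) E.dependent_zero)
    ultimately have "B0 = {}" using B0(1) by blast
    then have "E.dim (Esub (w \<otimes> u)) = 0" using B0 by simp
    then show False using dim1 w u by auto
  qed
  have A4: "\<exists>c. z = sE c (b w * b u)" if "w \<in> carrier G" "u \<in> carrier G" "z \<in> Esub (w \<otimes> u)" for w u z
  proof -
    have "w \<otimes> u \<in> carrier G" using that by simp
    then have "E.dim (Esub (w \<otimes> u)) = 1" using dim1 by blast
    then show ?thesis using E.dim1_span[of "Esub (w \<otimes> u)" "b w * b u" z] A2[OF that(1,2)] A3[OF that(1,2)] that(3) by blast
  qed
  have spanE: "E.span (b ` carrier G) = UNIV"
  proof -
    have "e \<in> E.span (b ` carrier G)" for e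
    proof -
      have "\<exists>c. (\<forall>w\<in>carrier G. c w \<in> Esub w) \<and> (\<forall>w. w \<notin> carrier G \<longrightarrow> c w = 0) \<and>
             e = (\<Sum>w\<in>carrier G. c w)"
        using ds2 by (simp only: ex1_implies_ex)
      then obtain c where c: "\<forall>w\<in>carrier G. c w \<in> Esub w" "e = (\<Sum>w\<in>carrier G. c w)"
        by blast
      have "c w \<in> E.span (b ` carrier G)" if wc: "w \<in> carrier G" for w
      proof -
        have "c w \<in> Esub w" using c(1) wc by blast
        then obtain \<alpha> where "c w = sE \<alpha> (b w)" using A1[OF wc] by blast
        then show ?thesis using wc by (simp add: E.span_base E.span_scale)
      qed
      then show ?thesis using c by (simp add: E.span_sum)
    qed
    then show ?thesis by auto
  qed
  have one_in: "1 \<in> Esub \<one>"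
  proof -
    define p where "p = b \<one>"
    have p: "p \<in> Esub \<one>" "p \<noteq> 0" using bw[of \<one>] unfolding p_def by auto
    have "p * p \<in> Esub \<one>" using A2[of \<one> \<one>] unfolding p_def by simp
    then obtain l where l: "p * p = sE l p" using A1[of \<one> "p*p"] unfolding p_def by auto
    have l0: "l \<noteq> 0" using l A3[of \<one> \<one>] unfolding p_def by auto
    define e where "e = sE (1/l) p"
    have ee: "e * e = e" unfolding e_def using l l0
      by (simp flip: sc1 sc2)
    have eb: "e * b w = b w" if w: "w \<in> carrier G" for w
    proof -
      have "p * b w \<in> Esub w" using A2[of \<one> w] w unfolding p_def by simp
      then have "e * b w \<in> Esub w" unfolding e_def using sub[OF w] by (simp flip: sc1 add: E.subspace_scale)
      then obtain \<mu> where mu: "e * b w = sE \<mu> (b w)" using A1 w by blast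
      have "e * b w \<noteq> 0" unfolding e_def using A3[of \<one> w] w l0 unfolding p_def by (simp flip: sc1)
      then have mu0: "\<mu> \<noteq> 0" using mu by auto
      have "e * (e * b w) = e * b w" using ee by (metis mult.assoc)
      moreover have "e * (e * b w) = sE (\<mu> * \<mu>) (b w)" using mu by (simp flip: sc2)
      ultimately have "sE (\<mu> * \<mu>) (b w) = sE \<mu> (b w)" using mu by simp
      then have "\<mu> * \<mu> = \<mu>" using bw[OF w] by simp
      then have "\<mu> = 1" using mu0 by simp
      then show ?thesis using mu by simp
    qed
    have "E.subspace {a. e * a = a}"
      by (rule E.subspaceI) (auto simp: distrib_left simp flip: sc2)
    then have "E.span (b ` carrier G) \<subseteq> {a. e * a = a}"
      using eb by (intro E.span_minimal) auto
    then have "1 \<in> {a. e * a = a}" using spanE by blast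
    then have "e = 1" by simp
    then have "1 = sE (1/l) p" unfolding e_def by simp
    moreover have "sE (1/l) p \<in> Esub \<one>" using E.subspace_scale[OF sub[of \<one>]] p by simp
    ultimately show ?thesis by simp
  qed
  obtain y where y: "y \<in> Gamma_x G F x" and gne: "gamma_x sE \<iota> b x y \<noteq> 1"
    using not_eff unfolding effective_def by blast
  have yc: "y \<in> carrier G" using y unfolding Gamma_x_def by simp
  define y' where "y' = inv_into (carrier G) F y"
  have bijF: "bij_betw F (carrier G) (carrier G)" using autF by (simp add: iso_def)
  have y'c: "y' \<in> carrier G" and Fy': "F y' = y" unfolding y'_def
    using bijF yc by (auto simp: bij_betw_def inv_into_into f_inv_into_f)
  have eq: "y' \<otimes> x \<otimes> inv y = x" using y unfolding Gamma_x_def y'_def by simp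
  have yx: "y' \<otimes> x = x \<otimes> y"
  proof -
    have "y' \<otimes> x \<otimes> inv y \<otimes> y = y' \<otimes> x" using y'c x_in yc by (simp add: grp.m_assoc)
    then show ?thesis using eq by simp
  qed
  have "b y \<in> \<iota> ` Esub y'" using iota_grad y'c Fy' bw[OF yc] by simp
  then obtain e where e0: "b y = \<iota> e" and e1: "e \<in> Esub y'" by (rule imageE)
  have e: "e \<in> Esub y'" "\<iota> e = b y" using e0 e1 by simp_all
  have inve: "inv_into UNIV \<iota> (b y) = e"
    using inv_into_f_f[OF bij_is_inj[OF iota_bij], of e] e(2) by simp
  have "e * b x \<in> {a * c | a c. a \<in> Esub y' \<and> c \<in> Esub x}" using e(1) bw[OF x_in] by blast
  then have "e * b x \<in> Esub (x \<otimes> y)" using mult y'c x_in yx by simp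
  then obtain g where g: "e * b x = sE g (b x * b y)" using A4 x_in yc by blast
  have gam: "gamma_x sE \<iota> b x y = g"
    unfolding gamma_x_def inve
  proof (rule the_equality)
    show "e * b x = sE g (b x * b y)" by (rule g)
    fix c assume "e * b x = sE c (b x * b y)"
    then show "c = g" using g A3[OF x_in yc] by simp
  qed
  have g1: "g \<noteq> 1" using gne gam by simp
  define T where "T = \<iota>V \<circ> act (b x)"
  define B where "B = act (b y)"
  define C where "C = act (b (inv y))"
  have invc: "inv y \<in> carrier G" using yc by simp
  have TL: "Vector_Spaces.linear sV sV T" unfolding T_def
    using Vector_Spaces.linear_compose[OF act_lin iotaV_lin] .
  have BL: "Vector_Spaces.linear sV sV B" unfolding B_def by (rule act_lin)
  have CL: "Vector_Spaces.linear sV sV C" unfolding C_def by (rule act_lin)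
  have iV_scale: "\<iota>V (sV c v) = sV c (\<iota>V v)" for c v using iotaV_lin unfolding Vector_Spaces.linear_iff by blast
  have BT: "B (T v) = sV g (T (B v))" for v
  proof -
    have "\<iota>V (act (e * b x) v) = B (T v)"
      unfolding B_def T_def using iotaV_comm iota_mult e by (simp add: act_mult)
    moreover have "\<iota>V (act (e * b x) v) = sV g (T (B v))"
      unfolding B_def T_def g by (simp add: act_scl act_mult iV_scale)
    ultimately show ?thesis by simp
  qed
  obtain k1 where k1: "1 = sE k1 (b y * b (inv y))"
    using A4[OF yc invc, of 1] one_in yc by auto
  obtain k2 where k2: "1 = sE k2 (b (inv y) * b y)"
    using A4[OF invc yc, of 1] one_in yc by auto
  have k10: "k1 \<noteq> 0" using k1 by (metis E.scale_zero_left zero_neq_one)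
  have k20: "k2 \<noteq> 0" using k2 by (metis E.scale_zero_left zero_neq_one)
  have p1: "b y * b (inv y) = sE (1/k1) 1"
  proof -
    have "sE (1/k1) (sE k1 (b y * b (inv y))) = b y * b (inv y)" using k10 by simp
    then show ?thesis using k1 by simp
  qed
  have p2: "b (inv y) * b y = sE (1/k2) 1"
  proof -
    have "sE (1/k2) (sE k2 (b (inv y) * b y)) = b (inv y) * b y" using k20 by simp
    then show ?thesis using k2 by simp
  qed
  have "b y * (b (inv y) * b y) = (b y * b (inv y)) * b y" by (simp add: mult.assoc)
  then have "sE (1/k2) (b y) = sE (1/k1) (b y)" unfolding p1 p2 by (simp flip: sc1 sc2)
  then have k12: "k1 = k2" using bw[OF yc] by simp
  define \<kappa> where "\<kappa> = 1 / k1"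
  have kap0: "\<kappa> \<noteq> 0" unfolding \<kappa>_def using k10 by simp
  have BC: "B (C v) = sV \<kappa> v" for v unfolding B_def C_def \<kappa>_def
    by (simp flip: act_mult add: p1 act_scl act_one)
  have CB: "C (B v) = sV \<kappa> v" for v unfolding B_def C_def \<kappa>_def
    by (simp flip: act_mult add: p2 act_scl act_one k12)
  obtain v0 where v0: "v0 \<noteq> (0::'v)" using V_simple unfolding simple_module_def by blast
  define S where "S = (\<lambda>w. act (b w) v0) ` carrier G"
  have finS: "finite S" unfolding S_def using fin by simp
  have spanS: "V.span S = UNIV"
  proof -
    have Wsub: "V.subspace (range (\<lambda>a. act a v0))"
    proof (rule V.subspaceI)
      show "0 \<in> range (\<lambda>a. act a v0)" using act_zero by (metis rangeI)
      show "u + w \<in> range (\<lambda>a. act a v0)" if "u \<in> range (\<lambda>a. act a v0)" "w \<in> range (\<lambda>a. act a v0)" for u w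
        using that by (auto simp flip: act_addl)
      show "sV c u \<in> range (\<lambda>a. act a v0)" if "u \<in> range (\<lambda>a. act a v0)" for c u
        using that by (auto simp flip: act_scl)
    qed
    moreover have "\<forall>a. \<forall>v\<in>range (\<lambda>a. act a v0). act a v \<in> range (\<lambda>a. act a v0)"
      by (auto simp flip: act_mult)
    moreover have "range (\<lambda>a. act a v0) \<noteq> {0}" using act_one v0 by (metis rangeI singletonD)
    ultimately have W: "range (\<lambda>a. act a v0) = UNIV" using V_simple unfolding simple_module_def by blast
    have Psub: "E.subspace {a. act a v0 \<in> V.span S}"
      by (rule E.subspaceI) (auto simp: act_zero act_addl act_scl V.span_zero V.span_add V.span_scale)
    have "E.span (b ` carrier G) \<subseteq> {a. act a v0 \<in> V.span S}"
      by (rule E.span_minimal[OF _ Psub]) (auto simp: S_def intro: V.span_base)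
    then have "act a v0 \<in> V.span S" for a using spanE by auto
    then have "range (\<lambda>a. act a v0) \<subseteq> V.span S" by blast
    then show ?thesis using W by blast
  qed
  have tr_sc: "lin_trace sV (\<lambda>v. sV c (f v)) = c * lin_trace sV f" for c f
    by (rule V.trace_scale[OF finS spanS])
  have "\<kappa> * lin_trace sV T = lin_trace sV (\<lambda>v. sV \<kappa> (T v))" by (simp add: tr_sc)
  also have "(\<lambda>v. sV \<kappa> (T v)) = (T \<circ> C) \<circ> B"
    using CB TL by (auto simp: Vector_Spaces.linear_iff)
  also have "lin_trace sV ((T \<circ> C) \<circ> B) = lin_trace sV (B \<circ> (T \<circ> C))"
    by (rule V.trace_comm[OF finS spanS Vector_Spaces.linear_compose[OF CL TL] BL])
  also have "B \<circ> (T \<circ> C) = (\<lambda>v. sV g (sV \<kappa> (T v)))"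
    using BT BC TL by (auto simp: Vector_Spaces.linear_iff)
  also have "lin_trace sV \<dots> = g * (\<kappa> * lin_trace sV T)" by (simp add: tr_sc)
  finally have "(1 - g) * (\<kappa> * lin_trace sV T) = 0" by (simp add: algebra_simps)
  then have "lin_trace sV T = 0" using g1 kap0 by simp
  then show ?thesis unfolding T_def .
qed

end
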